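(* Let $n$ be a positive integer. The Logarithmic Least Squares Method is the unique weighting method $f: \mathcal{A}^{n \times n} \to \mathcal{R}^n$ satisfying correctness and invariance to $\alpha$-transformation on a triad. That is, a weighting method $f$ satisfies both properties if and only if, for every $\mathbf{A} \in \mathcal{A}^{n\times n}$ and every $i$, \[ f_i(\mathbf{A}) = \frac{\prod_{j=1}^n a_{i,j}^{1/n}}{\sum_{k=1}^n \prod_{j=1}^n a_{k,j}^{1/n}}. \]
   Context: A pairwise comparison matrix of size $n$ is a matrix $\mathbf{A} = [a_{i,j}]$ with all entries positive and $a_{j,i} = 1/a_{i,j}$ for all $1 \le i,j \le n$; $\mathcal{A}^{n\times n}$ denotes the set of these. $\mathbf{A}$ is consistent if $a_{i,k} = a_{i,j}a_{j,k}$ for all $i,j,k$. A weight vector is $\mathbf{w} \in \mathbb{R}^n$ with all entries positive and $\sum_i w_i = 1$; $\mathcal{R}^n$ denotes the set of weight vectors. A weighting method is any function $f: \mathcal{A}^{n\times n} \to \mathcal{R}^n$. The Logarithmic Least Squares Method (LLSM) assigns to $\mathbf{A}$ the minimizer over $\mathbf{w} \in \mathcal{R}^n$ of $\sum_{i=1}^n\sum_{j=1}^n [\log a_{i,j} - \log(w_i/w_j)]^2$, which equals the normalized row geometric mean vector $w_i = \prod_j a_{i,j}^{1/n} / \sum_k \prod_j a_{k,j}^{1/n}$. Correctness: $f$ is correct if for every consistent $\mathbf{A}\in\mathcal{A}^{n\times n}$, $f_i(\mathbf{A})/f_j(\mathbf{A}) = a_{i,j}$ for all $i,j$. An $\alpha$-transformation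 on the triad $(i,j,k)$ (three distinct indices), with $\alpha>0$, maps $\mathbf{A}$ to the pairwise comparison matrix $\hat{\mathbf{A}}$ with $\hat a_{i,j} = \alpha a_{i,j}$, $\hat a_{j,i} = a_{j,i}/\alpha$, $\hat a_{j,k} = \alpha a_{j,k}$, $\hat a_{k,j} = a_{k,j}/\alpha$, $\hat a_{k,i} = \alpha a_{k,i}$, $\hat a_{i,k} = a_{i,k}/\alpha$, and all other entries unchanged. Invariance to $\alpha$-transformation on a triad: $f(\mathbf{A}) = f(\hat{\mathbf{A}})$ whenever $\hat{\mathbf{A}}$ is obtained from $\mathbf{A}$ by an $\alpha$-transformation on a triad. *)

theory Defs
  imports "HOL-Analysis.Analysis"
begin

text \<open>Matrices of size n are indexed by a finite type 'n, with n = CARD('n) \<ge> 1.\<close>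

definition pcm :: "real^'n^'n \<Rightarrow> bool" where
  "pcm A \<longleftrightarrow> (\<forall>i j. A$i$j > 0 \<and> A$j$i = 1 / A$i$j)"

definition consistent_pcm :: "real^'n^'n \<Rightarrow> bool" where
  "consistent_pcm A \<longleftrightarrow> (\<forall>i j k. A$i$k = A$i$j * A$j$k)"

definition weight_vector :: "real^'n \<Rightarrow> bool" where
  "weight_vector w \<longleftrightarrow> (\<forall>i. w$i > 0) \<and> (\<Sum>i\<in>UNIV. w$i) = 1"

text \<open>A weighting method: a function from pairwise comparison matrices to weight vectors
  (values on non-PCM arguments are irrelevant).\<close>
definition weighting_method :: "(real^'n^'n \<Rightarrow> real^'n) \<Rightarrow> bool" where
  "weighting_method f \<longleftrightarrow> (\<forall>A. pcm A \<longrightarrow> weight_vector (f A))"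

definition correct_method :: "(real^'n^'n \<Rightarrow> real^'n) \<Rightarrow> bool" where
  "correct_method f \<longleftrightarrow>
     (\<forall>A. pcm A \<and> consistent_pcm A \<longrightarrow> (\<forall>i j. f A $ i / f A $ j = A$i$j))"

definition alpha_transform :: "real \<Rightarrow> 'n \<Rightarrow> 'n \<Rightarrow> 'n \<Rightarrow> real^'n^'n \<Rightarrow> real^'n^'n" where
  "alpha_transform \<alpha> i j k A = (\<chi> p q.
     if (p = i \<and> q = j) \<or> (p = j \<and> q = k) \<or> (p = k \<and> q = i) then \<alpha> * A$p$q
     else if (p = j \<and> q = i) \<or> (p = k \<and> q = j) \<or> (p = i \<and> q = k) then A$p$q / \<alpha>
     else A$p$q)"

definition triad_invariant :: "(real^'n^'n \<Rightarrow> real^'n) \<Rightarrow> bool" where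
  "triad_invariant f \<longleftrightarrow>
     (\<forall>A i j k \<alpha>. pcm A \<and> i \<noteq> j \<and> j \<noteq> k \<and> i \<noteq> k \<and> \<alpha> > 0 \<longrightarrow>
        f (alpha_transform \<alpha> i j k A) = f A)"

definition llsm :: "real^'n^'n \<Rightarrow> real^'n" where
  "llsm A = (\<chi> i. (\<Prod>j\<in>UNIV. A$i$j powr (1 / real CARD('n))) /
                   (\<Sum>k\<in>UNIV. \<Prod>j\<in>UNIV. A$k$j powr (1 / real CARD('n))))"

end

theory Submission
  imports Defs
begin

definition tri :: "'n \<Rightarrow> 'n \<Rightarrow> 'n \<Rightarrow> 'n \<Rightarrow> 'n \<Rightarrow> real" where
  "tri i j k p q = of_bool (p = i \<and> q = j) + of_bool (p = j \<and> q = k) + of_bool (p = k \<and> q = i)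
     - of_bool (p = j \<and> q = i) - of_bool (p = k \<and> q = j) - of_bool (p = i \<and> q = k)"

definition scl :: "('n \<Rightarrow> 'n \<Rightarrow> real) \<Rightarrow> real^'n^'n \<Rightarrow> real^'n^'n" where
  "scl E A = (\<chi> p q. A$p$q * exp (E p q))"

lemma sum_ob: "(\<Sum>q\<in>UNIV. of_bool (p = a \<and> q = (b::'n::finite)) :: real) = of_bool (p = a)"
  by (cases "p = a") (simp_all add: of_bool_def sum.delta sum.delta')

lemma tri_skew: "tri i j k q p = - tri i j k p q"
  unfolding tri_def by (simp add: conj_commute)

lemma tri_degen: "\<not> (i \<noteq> j \<and> j \<noteq> k \<and> i \<noteq> k) \<Longrightarrow> tri i j k p q = 0"
proof -
  assume "\<not> (i \<noteq> j \<and> j \<noteq> k \<and> i \<noteq> k)"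
  then have "i = j \<or> j = k \<or> i = k" by blast
  then show ?thesis unfolding tri_def by (elim disjE) (simp_all add: conj_commute)
qed

lemma tri_rowsum: "(\<Sum>q\<in>UNIV. tri i j k p (q::'n::finite)) = 0"
  unfolding tri_def by (simp only: sum.distrib sum_subtractf sum_ob)
lemma pcm_scl:
  assumes "pcm A" "\<forall>p q. E q p = - E p q"
  shows "pcm (scl E A)"
  unfolding pcm_def scl_def
proof (intro allI conjI)
  fix i j
  have a: "A$i$j > 0" "A$j$i = 1 / A$i$j" using assms(1) unfolding pcm_def by blast+
  have e: "E j i = - E i j" using assms(2) by blast
  show "(\<chi> p q. A$p$q * exp (E p q))$i$j > 0" using a by simp
  show "(\<chi> p q. A$p$q * exp (E p q))$j$i = 1 / (\<chi> p q. A$p$q * exp (E p q))$i$j"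
    using a e by (simp add: exp_minus divide_simps)
qed

lemma alpha_scl:
  assumes "i \<noteq> j" "j \<noteq> k" "i \<noteq> k"
  shows "alpha_transform (exp s) i j k A = scl (\<lambda>p q. s * tri i j k p q) A"
  unfolding alpha_transform_def scl_def tri_def
  using assms by (auto simp: vec_eq_iff exp_minus field_simps)

lemma scl_scl: "scl E (scl F A) = scl (\<lambda>p q. F p q + E p q) A"
  unfolding scl_def by (simp add: vec_eq_iff exp_add)

lemma scl_zero: "scl (\<lambda>p q. 0) A = A"
  unfolding scl_def by (simp add: vec_eq_iff)

lemma sum_tri_skew: "(\<Sum>x\<in>S. t x * tri r (fst x) (snd x) q p) = - (\<Sum>x\<in>S. t x * tri r (fst x) (snd x) p q)"
  unfolding sum_negf[symmetric] by (rule sum.cong) (simp_all add: tri_skew[of _ _ _ q p])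

lemma inv_S:
  assumes ti: "triad_invariant f" and "finite S"
  shows "pcm A \<Longrightarrow> f (scl (\<lambda>p q. \<Sum>x\<in>S. t x * tri r (fst x) (snd x) p q) A) = f A"
  using \<open>finite S\<close>
proof (induction S)
  case empty
  then show ?case by (simp add: scl_zero)
next
  case (insert x S)
  let ?F = "\<lambda>p q. \<Sum>x\<in>S. t x * tri r (fst x) (snd x) p q"
  let ?E = "\<lambda>p q. t x * tri r (fst x) (snd x) p q"
  have eq: "scl (\<lambda>p q. \<Sum>x\<in>insert x S. t x * tri r (fst x) (snd x) p q) A = scl ?E (scl ?F A)"
    using insert(1,2) by (simp add: scl_scl add.commute)
  have sk: "\<forall>p q. ?F q p = - ?F p q"
    by (intro allI) (rule sum_tri_skew)
  have pB: "pcm (scl ?F A)" using pcm_scl[OF insert(4) sk] .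
  show ?case
  proof (cases "r \<noteq> fst x \<and> fst x \<noteq> snd x \<and> r \<noteq> snd x")
    case True
    have A1: "alpha_transform (exp (t x)) r (fst x) (snd x) (scl ?F A) = scl ?E (scl ?F A)"
      using True by (intro alpha_scl) auto
    have A2: "f (alpha_transform (exp (t x)) r (fst x) (snd x) (scl ?F A)) = f (scl ?F A)"
      using ti[unfolded triad_invariant_def, rule_format, of "scl ?F A" r "fst x" "snd x" "exp (t x)"]
        pB True by simp
    show ?thesis by (simp only: eq A1[symmetric] A2 insert(3)[OF insert(4)])
  next
    case False
    then have "\<And>p q. ?E p q = 0" using tri_degen[of r "fst x" "snd x"] by simp
    then have E0: "?E = (\<lambda>p q. 0)" by (simp add: fun_eq_iff)
    show ?thesis unfolding eq E0 scl_zero by (rule insert(3)[OF insert(4)])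
  qed
qed

lemma sd: "(\<Sum>j\<in>UNIV. (c::'n::finite\<Rightarrow>real) j * of_bool (q = j)) = c q"
proof -
  have "(\<lambda>j. c j * of_bool (q = j)) = (\<lambda>j. if j = q then c j else 0)" by (auto simp: fun_eq_iff)
  then show ?thesis by (simp add: sum.delta)
qed

lemma sd2: "(\<Sum>j\<in>UNIV. (c::'n::finite\<Rightarrow>real) j * of_bool (P \<and> q = j)) = of_bool P * c q"
  by (cases P) (simp_all add: sd)

lemma sd3: "(\<Sum>j\<in>UNIV. (c::'n::finite\<Rightarrow>real) j * of_bool (q = j \<and> P)) = of_bool P * c q"
  by (cases P) (simp_all add: sd)

lemma sd0: "(\<Sum>j\<in>UNIV. (c::'n::finite\<Rightarrow>real) j * of_bool P) = of_bool P * sum c UNIV"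
  by (cases P) simp_all

lemma ds_a: "(\<Sum>i\<in>UNIV. \<Sum>j\<in>UNIV. (c::'n::finite\<Rightarrow>'n\<Rightarrow>real) i j * of_bool (P \<and> q = i)) = of_bool P * (\<Sum>j\<in>UNIV. c q j)"
proof -
  have "(\<Sum>i\<in>UNIV. \<Sum>j\<in>UNIV. c i j * of_bool (P \<and> q = i)) = (\<Sum>i\<in>UNIV. (\<Sum>j\<in>UNIV. c i j) * of_bool (P \<and> q = i))"
    by (simp add: sum_distrib_right)
  also have "\<dots> = of_bool P * (\<Sum>j\<in>UNIV. c q j)" by (rule sd2)
  finally show ?thesis .
qed

lemma ds_b: "(\<Sum>i\<in>UNIV. \<Sum>j\<in>UNIV. (c::'n::finite\<Rightarrow>'n\<Rightarrow>real) i j * of_bool (p = i \<and> q = j)) = c p q"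
proof -
  have "(\<Sum>i\<in>UNIV. \<Sum>j\<in>UNIV. c i j * of_bool (p = i \<and> q = j)) = (\<Sum>i\<in>UNIV. c i q * of_bool (p = i))"
    by (intro sum.cong refl) (simp add: sd3 mult.commute)
  also have "\<dots> = c p q" by (rule sd)
  finally show ?thesis .
qed

lemma ds_c: "(\<Sum>i\<in>UNIV. \<Sum>j\<in>UNIV. (c::'n::finite\<Rightarrow>'n\<Rightarrow>real) i j * of_bool (p = j \<and> P)) = of_bool P * (\<Sum>i\<in>UNIV. c i p)"
  by (simp add: sd3 sum_distrib_left)

lemma ds_d: "(\<Sum>i\<in>UNIV. \<Sum>j\<in>UNIV. (c::'n::finite\<Rightarrow>'n\<Rightarrow>real) i j * of_bool (p = i \<and> P)) = of_bool P * (\<Sum>j\<in>UNIV. c p j)"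
proof -
  have "(\<Sum>i\<in>UNIV. \<Sum>j\<in>UNIV. c i j * of_bool (p = i \<and> P)) = (\<Sum>i\<in>UNIV. (\<Sum>j\<in>UNIV. c i j) * of_bool (p = i \<and> P))"
    by (simp add: sum_distrib_right)
  also have "\<dots> = of_bool P * (\<Sum>j\<in>UNIV. c p j)" by (rule sd3)
  finally show ?thesis .
qed

lemma ds_e: "(\<Sum>i\<in>UNIV. \<Sum>j\<in>UNIV. (c::'n::finite\<Rightarrow>'n\<Rightarrow>real) i j * of_bool (p = j \<and> q = i)) = c q p"
proof -
  have "(\<Sum>i\<in>UNIV. \<Sum>j\<in>UNIV. c i j * of_bool (p = j \<and> q = i)) = (\<Sum>i\<in>UNIV. c i p * of_bool (q = i))"
    by (intro sum.cong refl) (simp add: sd3 mult.commute)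
  also have "\<dots> = c q p" by (rule sd)
  finally show ?thesis .
qed

lemma ds_f: "(\<Sum>i\<in>UNIV. \<Sum>j\<in>UNIV. (c::'n::finite\<Rightarrow>'n\<Rightarrow>real) i j * of_bool (P \<and> q = j)) = of_bool P * (\<Sum>i\<in>UNIV. c i q)"
  by (simp add: sd2 sum_distrib_left)

lemma big_sum:
  fixes M :: "'n::finite \<Rightarrow> 'n \<Rightarrow> real"
  assumes sk: "\<And>p q. M q p = - M p q" and rs: "\<And>p. (\<Sum>q\<in>UNIV. M p q) = 0"
  shows "(\<Sum>x\<in>UNIV. (M (fst x) (snd x) / 2) * tri r (fst x) (snd x) p q) = M p q"
proof -
  define c where "c = (\<lambda>i j. M i j / 2)"
  have cs: "(\<Sum>p\<in>UNIV. M p q) = 0" for q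
  proof -
    have "(\<Sum>p\<in>UNIV. M p q) = (\<Sum>p\<in>UNIV. - M q p)" by (intro sum.cong refl) (rule sk)
    also have "\<dots> = - (\<Sum>p\<in>UNIV. M q p)" by (rule sum_negf)
    finally show ?thesis using rs[of q] by simp
  qed
  have crs: "(\<Sum>j\<in>UNIV. c i j) = 0" for i
    unfolding c_def using rs[of i] by (simp add: sum_divide_distrib[symmetric])
  have ccs: "(\<Sum>i\<in>UNIV. c i j) = 0" for j
    unfolding c_def using cs[of j] by (simp add: sum_divide_distrib[symmetric])
  have "(\<Sum>x\<in>UNIV. (M (fst x) (snd x) / 2) * tri r (fst x) (snd x) p q)
      = (\<Sum>i\<in>UNIV. \<Sum>j\<in>UNIV. c i j * tri r i j p q)"
    unfolding sum.cartesian_product UNIV_Times_UNIV c_def by (simp add: case_prod_beta)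
  also have "(\<Sum>i\<in>UNIV. \<Sum>j\<in>UNIV. c i j * tri r i j p q) = (\<Sum>i\<in>UNIV. \<Sum>j\<in>UNIV. c i j * of_bool (p = r \<and> q = i))
      + (\<Sum>i\<in>UNIV. \<Sum>j\<in>UNIV. c i j * of_bool (p = i \<and> q = j))
      + (\<Sum>i\<in>UNIV. \<Sum>j\<in>UNIV. c i j * of_bool (p = j \<and> q = r))
      - (\<Sum>i\<in>UNIV. \<Sum>j\<in>UNIV. c i j * of_bool (p = i \<and> q = r))
      - (\<Sum>i\<in>UNIV. \<Sum>j\<in>UNIV. c i j * of_bool (p = j \<and> q = i))
      - (\<Sum>i\<in>UNIV. \<Sum>j\<in>UNIV. c i j * of_bool (p = r \<and> q = j))"
    unfolding tri_def by (simp only: distrib_left right_diff_distrib sum.distrib sum_subtractf)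
  also have "\<dots> = c p q - c q p"
    by (simp only: ds_a ds_b ds_c ds_d ds_e ds_f crs ccs)
  finally show ?thesis unfolding c_def using sk[of p q] by simp
qed

definition rho :: "real^'n^'n \<Rightarrow> 'n \<Rightarrow> real" where
  "rho A i = (\<Sum>j\<in>UNIV. ln (A$i$j)) / real CARD('n)"

lemma pcm_pos: "pcm (A::real^'n^'n) \<Longrightarrow> A$i$j > 0"
  unfolding pcm_def by blast

lemma pcm_lnsk: "pcm (A::real^'n^'n) \<Longrightarrow> ln (A$j$i) = - ln (A$i$j)"
proof -
  assume h: "pcm A"
  have "A$j$i = 1 / A$i$j" using h unfolding pcm_def by blast
  moreover have "A$i$j > 0" using h by (rule pcm_pos)
  ultimately show ?thesis by (simp add: ln_div)
qed

lemma llsm_exp: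
  fixes A :: "real^'n^'n"
  assumes "pcm A"
  shows "llsm A = (\<chi> i. exp (rho A i) / (\<Sum>k\<in>UNIV. exp (rho A k)))"
proof -
  have pos: "\<And>i j. A$i$j > 0" using assms by (rule pcm_pos)
  then have nz: "\<And>i j. A$i$j \<noteq> 0" by (metis less_irrefl)
  have "\<And>i. (\<Prod>j\<in>UNIV. A$i$j powr (1 / real CARD('n))) = exp (rho A i)"
    using nz by (simp add: powr_def rho_def exp_sum[symmetric] sum_divide_distrib)
  then show ?thesis unfolding llsm_def by simp
qed

lemma rho_scl:
  fixes A :: "real^'n^'n"
  assumes "pcm A"
  shows "rho (scl E A) i = rho A i + (\<Sum>q\<in>UNIV. E i q) / real CARD('n)"
proof -
  have pos: "\<And>i j. A$i$j > 0" using assms by (rule pcm_pos)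
  then have nz: "\<And>i j. A$i$j \<noteq> 0" by (metis less_irrefl)
  show ?thesis unfolding rho_def scl_def using pos nz
    by (simp add: ln_mult sum.distrib add_divide_distrib)
qed

lemma rho_sum:
  fixes A :: "real^'n^'n"
  assumes "pcm A"
  shows "(\<Sum>i\<in>UNIV. rho A i) = 0"
proof -
  have "(\<Sum>i\<in>UNIV. \<Sum>j\<in>UNIV. ln (A$i$j)) = (\<Sum>j\<in>UNIV. \<Sum>i\<in>UNIV. ln (A$i$j))"
    by (rule sum.swap)
  also have "\<dots> = (\<Sum>j\<in>UNIV. \<Sum>i\<in>UNIV. - ln (A$j$i))"
    by (intro sum.cong refl) (rule pcm_lnsk[OF assms])
  also have "\<dots> = - (\<Sum>i\<in>UNIV. \<Sum>j\<in>UNIV. ln (A$i$j))"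
    by (simp add: sum_negf)
  finally have "(\<Sum>i\<in>UNIV. \<Sum>j\<in>UNIV. ln (A$i$j)) = 0" by simp
  then show ?thesis unfolding rho_def by (simp add: sum_divide_distrib[symmetric])
qed

lemma llsm_correct: "correct_method (llsm :: real^'n^'n \<Rightarrow> real^'n)"
  unfolding correct_method_def
proof (intro allI impI)
  fix A :: "real^'n^'n" and i j :: 'n assume h: "pcm A \<and> consistent_pcm A"
  have pos: "\<And>i j. A$i$j > 0" using h pcm_pos by blast
  have c: "\<And>q. A$i$q = A$i$j * A$j$q" using h unfolding consistent_pcm_def by blast
  have lq: "ln (A$i$q) = ln (A$i$j) + ln (A$j$q)" for q
  proof -
    have "ln (A$i$q) = ln (A$i$j * A$j$q)" using c[of q] by (rule arg_cong)
    also have "\<dots> = ln (A$i$j) + ln (A$j$q)" using pos[of i j] pos[of j q] by (auto simp: ln_mult)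
    finally show ?thesis .
  qed
  have "(\<Sum>q\<in>UNIV. ln (A$i$q)) = (\<Sum>q\<in>UNIV. ln (A$i$j) + ln (A$j$q))"
    by (intro sum.cong refl) (rule lq)
  also have "\<dots> = real CARD('n) * ln (A$i$j) + (\<Sum>q\<in>UNIV. ln (A$j$q))"
    by (simp add: sum.distrib)
  finally have "rho A i = ln (A$i$j) + rho A j"
    unfolding rho_def by (simp add: field_simps)
  then have "exp (rho A i) / exp (rho A j) = A$i$j"
    using pos[of i j] by (simp add: exp_add)
  moreover have "(\<Sum>k\<in>UNIV. exp (rho A k)) > 0"
    by (simp add: sum_pos)
  ultimately show "llsm A $ i / llsm A $ j = A$i$j"
    using h by (simp add: llsm_exp)
qed

lemma pcm_alpha:
  fixes A :: "real^'n^'n"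
  assumes "pcm A" "i \<noteq> j" "j \<noteq> k" "i \<noteq> k" "\<alpha> > 0"
  shows "alpha_transform \<alpha> i j k A = scl (\<lambda>p q. ln \<alpha> * tri i j k p q) A"
    and "pcm (alpha_transform \<alpha> i j k A)"
proof -
  have a: "\<alpha> = exp (ln \<alpha>)" using assms by simp
  show eq: "alpha_transform \<alpha> i j k A = scl (\<lambda>p q. ln \<alpha> * tri i j k p q) A"
    using alpha_scl[of i j k "ln \<alpha>" A] assms a by metis
  have sk: "\<forall>p q. ln \<alpha> * tri i j k q p = - (ln \<alpha> * tri i j k p q)"
    by (metis tri_skew mult_minus_right)
  show "pcm (alpha_transform \<alpha> i j k A)" unfolding eq using pcm_scl[OF assms(1) sk] .
qed

lemma llsm_triad: "triad_invariant (llsm :: real^'n^'n \<Rightarrow> real^'n)"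
  unfolding triad_invariant_def
proof (intro allI impI)
  fix A :: "real^'n^'n" and i j k :: 'n and \<alpha> :: real
  assume h: "pcm A \<and> i \<noteq> j \<and> j \<noteq> k \<and> i \<noteq> k \<and> \<alpha> > 0"
  have eq: "alpha_transform \<alpha> i j k A = scl (\<lambda>p q. ln \<alpha> * tri i j k p q) A"
    and pc: "pcm (alpha_transform \<alpha> i j k A)" using pcm_alpha h by blast+
  have "\<And>p. rho (scl (\<lambda>p q. ln \<alpha> * tri i j k p q) A) p = rho A p"
    using h by (simp add: rho_scl sum_distrib_left[symmetric] tri_rowsum)
  then show "llsm (alpha_transform \<alpha> i j k A) = llsm A"
    using pc h unfolding eq by (simp add: llsm_exp)
qed

theorem theorem4p1:
  fixes f :: "real^'n^'n \<Rightarrow> real^'n"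
  assumes "weighting_method f"
  shows "(correct_method f \<and> triad_invariant f) \<longleftrightarrow> (\<forall>A. pcm A \<longrightarrow> f A = llsm A)"
proof
  assume H: "correct_method f \<and> triad_invariant f"
  show "\<forall>A. pcm A \<longrightarrow> f A = llsm A"
  proof (intro allI impI)
    fix A :: "real^'n^'n" assume pA: "pcm A"
    define \<rho> where "\<rho> = rho A"
    define M where "M = (\<lambda>i j. \<rho> i - \<rho> j - ln (A$i$j))"
    have npos: "real CARD('n) > 0" by simp
    have Msk: "M q p = - M p q" for p q
    proof -
      have "ln (A$q$p) = - ln (A$p$q)" by (rule pcm_lnsk[OF pA])
      then show ?thesis unfolding M_def by simp
    qed
    have Mrs: "(\<Sum>q\<in>UNIV. M p q) = 0" for p
    proof -
      have "(\<Sum>q\<in>UNIV. M p q) = real CARD('n) * \<rho> p - (\<Sum>q\<in>UNIV. \<rho> q) - (\<Sum>q\<in>UNIV. ln (A$p$q))"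
        unfolding M_def by (simp add: sum_subtractf)
      also have "(\<Sum>q\<in>UNIV. \<rho> q) = 0" unfolding \<rho>_def by (rule rho_sum[OF pA])
      also have "real CARD('n) * \<rho> p = (\<Sum>q\<in>UNIV. ln (A$p$q))"
        unfolding \<rho>_def rho_def using npos by simp
      finally show ?thesis by simp
    qed
    obtain r :: 'n where True by blast
    have Eeq: "(\<lambda>p q. \<Sum>x\<in>UNIV. (M (fst x) (snd x) / 2) * tri r (fst x) (snd x) p q) = M"
      by (intro ext big_sum Msk Mrs)
    have "f (scl (\<lambda>p q. \<Sum>x\<in>UNIV. (M (fst x) (snd x) / 2) * tri r (fst x) (snd x) p q) A) = f A"
      using H pA by (intro inv_S) auto
    then have fA': "f (scl M A) = f A" unfolding Eeq .
    have ent: "scl M A $ p $ q = exp (\<rho> p - \<rho> q)" for p q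
    proof -
      have "A$p$q > 0" using pA by (rule pcm_pos)
      then show ?thesis unfolding scl_def M_def by (simp add: exp_diff)
    qed
    have pA': "pcm (scl M A)" using pcm_scl[OF pA] Msk by blast
    have cA': "consistent_pcm (scl M A)"
      unfolding consistent_pcm_def ent by (simp add: exp_add[symmetric])
    have rat: "f (scl M A) $ i / f (scl M A) $ j = exp (\<rho> i - \<rho> j)" for i j
      using H pA' cA' ent unfolding correct_method_def by metis
    define w where "w = f A"
    have wv: "weight_vector w" using assms pA unfolding weighting_method_def w_def by blast
    have wpos: "w $ i > 0" for i using wv unfolding weight_vector_def by blast
    have wsum: "(\<Sum>i\<in>UNIV. w $ i) = 1" using wv unfolding weight_vector_def by blast
    define \<kappa> where "\<kappa> = w $ r / exp (\<rho> r)"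
    have wi: "w $ i = \<kappa> * exp (\<rho> i)" for i
    proof -
      have "w $ i / w $ r = exp (\<rho> i - \<rho> r)" using rat[of i r] fA' unfolding w_def by simp
      then have "w $ i = exp (\<rho> i - \<rho> r) * w $ r" using wpos[of r] by (simp add: field_simps)
      then show ?thesis unfolding \<kappa>_def by (simp add: exp_diff field_simps)
    qed
    have "\<kappa> * (\<Sum>k\<in>UNIV. exp (\<rho> k)) = 1"
      using wsum unfolding wi by (simp add: sum_distrib_left)
    moreover have "(\<Sum>k\<in>UNIV. exp (\<rho> k)) > 0" by (simp add: sum_pos)
    ultimately have "\<kappa> = 1 / (\<Sum>k\<in>UNIV. exp (\<rho> k))" by (simp add: field_simps)
    then have "w = (\<chi> i. exp (\<rho> i) / (\<Sum>k\<in>UNIV. exp (\<rho> k)))"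
      by (simp add: vec_eq_iff wi)
    then show "f A = llsm A" unfolding w_def \<rho>_def using llsm_exp[OF pA] by simp
  qed
next
  assume H: "\<forall>A. pcm A \<longrightarrow> f A = llsm A"
  have c: "correct_method f"
    unfolding correct_method_def
  proof (intro allI impI)
    fix A :: "real^'n^'n" and i j :: 'n
    assume h: "pcm A \<and> consistent_pcm A"
    then have "f A = llsm A" using H by blast
    then show "f A $ i / f A $ j = A$i$j"
      using llsm_correct h unfolding correct_method_def by metis
  qed
  have t: "triad_invariant f"
    unfolding triad_invariant_def
  proof (intro allI impI)
    fix A :: "real^'n^'n" and i j k :: 'n and \<alpha> :: real
    assume h: "pcm A \<and> i \<noteq> j \<and> j \<noteq> k \<and> i \<noteq> k \<and> \<alpha> > 0"
    have p2: "pcm (alpha_transform \<alpha> i j k A)" using pcm_alpha(2) h by blast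
    have "llsm (alpha_transform \<alpha> i j k A) = llsm A"
      using llsm_triad h unfolding triad_invariant_def by blast
    then show "f (alpha_transform \<alpha> i j k A) = f A" using H h p2 by metis
  qed
  show "correct_method f \<and> triad_invariant f" using c t by blast
qed

end
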